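(* Suppose that for every $s\in G$ and every $x_{P(s)}\in\mathcal{X}_{P(s)}$ there is a (possibly infinite) set $\Gamma(s,x_{P(s)})$ of real-valued functions on $\mathcal{X}_s$ such that the local credal set $\mathcal{M}_{s\mid x_{P(s)}}$ is exactly the set of real-valued functions $p$ on $\mathcal{X}_s$ satisfying $$\sum_{z_s\in\mathcal{X}_s}p(z_s)=1\quad\text{and}\quad \sum_{z_s\in\mathcal{X}_s}p(z_s)\gamma(z_s)\geq 0\ \text{ for all }\gamma\in\Gamma(s,x_{P(s)}).$$ Then $\mathcal{F}^{\mathrm{irr}}_G(X_G)$ consists exactly of those probability mass functions $P(X_G)$ on $\mathcal{X}_G$ such that for all $s\in G$, all $x_{N(s)}\in\mathcal{X}_{N(s)}$ and all $\gamma\in\Gamma(s,x_{P(s)})$ (where $x_{P(s)}$ is the restriction of $x_{N(s)}$ to $P(s)$): $$\sum_{z_s\in\mathcal{X}_s}\ \sum_{z_{D(s)}\in\mathcal{X}_{D(s)}}P(z_s,z_{D(s)},x_{N(s)})\,\gamma(z_s)\geq 0.$$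
   Context: Setting: $G$ is a finite set of nodes forming a directed acyclic graph (DAG). Each node $s\in G$ carries a variable $X_s$ taking values in a finite nonempty set $\mathcal{X}_s$; for $S\subseteq G$, $X_S=(X_s)_{s\in S}$ takes values $x_S$ in $\mathcal{X}_S=\times_{s\in S}\mathcal{X}_s$ ($\mathcal{X}_\emptyset$ is a singleton). Graph notions: $P(s)$ is the set of parents of $s$; $s\sqsubseteq v$ means there is a directed path (possibly of length 0) from $s$ to $v$, and $s\sqsubset v$ means $s\sqsubseteq v$ and $s\neq v$; $D(s)=\{v\in G: s\sqsubset v\}$ (descendants); $N(s)=G\setminus(\{s\}\cup D(s))$ (non-descendants); $N'(s)=N(s)\setminus P(s)$ (non-parent non-descendants). Local models: for every $s\in G$ and $x_{P(s)}\in\mathcal{X}_{P(s)}$, $\mathcal{M}_{s\mid x_{P(s)}}$ is a nonempty closed convex set of probability mass functions on $\mathcal{X}_s$. A full conditional probability measure on a finite set $\Omega$ is a map $P:\mathcal{P}(\Omega)\times(\mathcal{P}(\Omega)\setminus\{\emptyset\})\to\mathbb{R}$, $(A,B)\mapsto P(A\mid B)$, such that for all $A,C\subseteq\Omega$ and nonempty $B\subseteq \Omega$: (F1) $P(\cdot\mid B)$ is a probability measure on $\mathcal{P}(\Omega)$ with $P(B\mid B)=1$; (F2) $P(A\cap C\mid B)=P(A\mid C\cap B)P(C\mid B)$ whenever $C\cap B\neq\emptyset$. For $S\subseteq G$ and $x_S\in\mathcal{X}_S$, the event $x_S$ denotes $\{z_G\in\mathcal{X}_G: z_S=x_S\}$;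 $P(A)=P(A\mid\mathcal{X}_G)$. The irrelevant natural extension $\mathcal{F}^{\mathrm{irr}}_G$ is the set of all full conditional probability measures $P$ on $\mathcal{X}_G$ such that for all $s\in G$ and all $x_{N(s)}\in\mathcal{X}_{N(s)}$, the mass function $P(X_s\mid x_{N(s)})$ (i.e. $z_s\mapsto P(z_s\mid x_{N(s)})$) belongs to $\mathcal{M}_{s\mid x_{P(s)}}$, where $x_{P(s)}$ is the restriction of $x_{N(s)}$ to $P(s)$. $\mathcal{F}^{\mathrm{irr}}_G(X_G)$ denotes the set of global mass functions $x_G\mapsto P(x_G)$ for $P\in\mathcal{F}^{\mathrm{irr}}_G$. *)

theory Defs
  imports "HOL-Analysis.Analysis"
begin

definition edges :: "'n set \<Rightarrow> ('n \<Rightarrow> 'n set) \<Rightarrow> ('n \<times> 'n) set" where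
  "edges G par = {(p, v). v \<in> G \<and> p \<in> par v}"

definition is_dag :: "'n set \<Rightarrow> ('n \<Rightarrow> 'n set) \<Rightarrow> bool" where
  "is_dag G par \<longleftrightarrow> finite G \<and> (\<forall>s\<in>G. par s \<subseteq> G) \<and> acyclic (edges G par)"

definition desc :: "'n set \<Rightarrow> ('n \<Rightarrow> 'n set) \<Rightarrow> 'n \<Rightarrow> 'n set" where
  "desc G par s = {v \<in> G. (s, v) \<in> (edges G par)\<^sup>+}"

definition nondesc :: "'n set \<Rightarrow> ('n \<Rightarrow> 'n set) \<Rightarrow> 'n \<Rightarrow> 'n set" where
  "nondesc G par s = G - ({s} \<union> desc G par s)"

text \<open>An element x_S of X_S is an extensional function in PiE S X
  (undefined outside S). The global space is PiE G X.\<close>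

definition event :: "('n \<Rightarrow> 'v) set \<Rightarrow> 'n set \<Rightarrow> ('n \<Rightarrow> 'v) \<Rightarrow> ('n \<Rightarrow> 'v) set" where
  "event \<Omega> S x = {z \<in> \<Omega>. \<forall>t\<in>S. z t = x t}"

definition full_cond_prob :: "'a set \<Rightarrow> ('a set \<Rightarrow> 'a set \<Rightarrow> real) \<Rightarrow> bool" where
  "full_cond_prob \<Omega> P \<longleftrightarrow>
     (\<forall>B. B \<subseteq> \<Omega> \<and> B \<noteq> {} \<longrightarrow>
        (\<forall>A. A \<subseteq> \<Omega> \<longrightarrow> P A B \<ge> 0) \<and>
        P \<Omega> B = 1 \<and>
        (\<forall>A C. A \<subseteq> \<Omega> \<and> C \<subseteq> \<Omega> \<and> A \<inter> C = {} \<longrightarrow> P (A \<union> C) B = P A B + P C B) \<and>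
        P B B = 1) \<and>
     (\<forall>A B C. A \<subseteq> \<Omega> \<and> B \<subseteq> \<Omega> \<and> C \<subseteq> \<Omega> \<and> B \<noteq> {} \<and> C \<inter> B \<noteq> {} \<longrightarrow>
        P (A \<inter> C) B = P A (C \<inter> B) * P C B)"

definition is_pmf_on :: "'a set \<Rightarrow> ('a \<Rightarrow> real) \<Rightarrow> bool" where
  "is_pmf_on S p \<longleftrightarrow> p \<in> extensional S \<and> (\<forall>z\<in>S. p z \<ge> 0) \<and> sum p S = 1"

definition local_model_ok :: "'v set \<Rightarrow> ('v \<Rightarrow> real) set \<Rightarrow> bool" where
  "local_model_ok S M \<longleftrightarrow> M \<noteq> {} \<and> (\<forall>p\<in>M. is_pmf_on S p) \<and> closed M \<and>
     (\<forall>p\<in>M. \<forall>q\<in>M. \<forall>t::real. 0 \<le> t \<and> t \<le> 1 \<longrightarrow>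
        (\<lambda>z\<in>S. t * p z + (1 - t) * q z) \<in> M)"

definition F_irr ::
  "'n set \<Rightarrow> ('n \<Rightarrow> 'n set) \<Rightarrow> ('n \<Rightarrow> 'v set) \<Rightarrow> ('n \<Rightarrow> ('n \<Rightarrow> 'v) \<Rightarrow> ('v \<Rightarrow> real) set)
    \<Rightarrow> (('n \<Rightarrow> 'v) set \<Rightarrow> ('n \<Rightarrow> 'v) set \<Rightarrow> real) set" where
  "F_irr G par X M =
     {P. full_cond_prob (PiE G X) P \<and>
         (\<forall>s\<in>G. \<forall>x \<in> PiE (nondesc G par s) X.
            (\<lambda>z\<in>X s. P (event (PiE G X) {s} (\<lambda>_. z)) (event (PiE G X) (nondesc G par s) x))
              \<in> M s (restrict x (par s)))}"

definition F_irr_global ::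
  "'n set \<Rightarrow> ('n \<Rightarrow> 'n set) \<Rightarrow> ('n \<Rightarrow> 'v set) \<Rightarrow> ('n \<Rightarrow> ('n \<Rightarrow> 'v) \<Rightarrow> ('v \<Rightarrow> real) set)
    \<Rightarrow> (('n \<Rightarrow> 'v) \<Rightarrow> real) set" where
  "F_irr_global G par X M =
     (\<lambda>P. \<lambda>x\<in>PiE G X. P {x} (PiE G X)) ` F_irr G par X M"

definition combine :: "'n set \<Rightarrow> ('n \<Rightarrow> 'n set) \<Rightarrow> 'n \<Rightarrow> 'v \<Rightarrow> ('n \<Rightarrow> 'v) \<Rightarrow> ('n \<Rightarrow> 'v) \<Rightarrow> ('n \<Rightarrow> 'v)" where
  "combine G par s z zD x = (\<lambda>t. if t = s then z else if t \<in> desc G par s then zD t else x t)"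

end

theory Submission
  imports Defs
begin


lemma sum_PiE_insert:
  assumes "x \<notin> S"
  shows "(\<Sum>f\<in>PiE (insert x S) T. F f) = (\<Sum>g\<in>PiE S T. \<Sum>y\<in>T x. F (g(x:=y)))"
proof -
  have "(\<Sum>f\<in>PiE (insert x S) T. F f) = (\<Sum>(y,g)\<in>T x \<times> PiE S T. F (g(x:=y)))"
    unfolding PiE_insert_eq by (subst sum.reindex[OF inj_combinator[OF assms]]) (simp add: case_prod_unfold)
  also have "\<dots> = (\<Sum>y\<in>T x. \<Sum>g\<in>PiE S T. F (g(x:=y)))"
    by (simp add: sum.cartesian_product)
  also have "\<dots> = (\<Sum>g\<in>PiE S T. \<Sum>y\<in>T x. F (g(x:=y)))"
    by (rule sum.swap)
  finally show ?thesis .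
qed

definition upd :: "'n set \<Rightarrow> ('n\<Rightarrow>'v) \<Rightarrow> ('n\<Rightarrow>'v) \<Rightarrow> ('n \<Rightarrow> 'v)" where
  "upd D \<omega> g = (\<lambda>t. if t \<in> D then g t else \<omega> t)"

lemma marg:
  fixes K :: "'n \<Rightarrow> ('n\<Rightarrow>'v) \<Rightarrow> 'v \<Rightarrow> real"
  assumes dag: "is_dag G par"
    and Kpmf: "\<And>t xp. t\<in>G \<Longrightarrow> xp \<in> PiE (par t) X \<Longrightarrow> (\<Sum>a\<in>X t. K t xp a) = 1"
  shows "D \<subseteq> H \<Longrightarrow> H \<subseteq> G \<Longrightarrow> (\<forall>t\<in>H. par t \<inter> D \<noteq> {} \<longrightarrow> t \<in> D) \<Longrightarrow> \<omega> \<in> Pi G X \<Longrightarrow>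
    (\<Sum>g\<in>PiE D X. \<Prod>t\<in>H. K t (restrict (upd D \<omega> g) (par t)) (upd D \<omega> g t))
     = (\<Prod>t\<in>H-D. K t (restrict \<omega> (par t)) (\<omega> t))"
proof (induction "card D" arbitrary: D H rule: less_induct)
  case less
  have finG: "finite G" and parG: "\<forall>s\<in>G. par s \<subseteq> G" and acy: "acyclic (edges G par)"
    using dag by (auto simp: is_dag_def)
  have finD: "finite D" using less.prems finG by (meson finite_subset)
  show ?case
  proof (cases "D = {}")
    case True
    then show ?thesis by (simp add: upd_def)
  next
    case False
    have fine: "finite (edges G par)"
    proof -
      have "edges G par \<subseteq> G \<times> G" using parG by (auto simp: edges_def)
      then show ?thesis using finG by (meson finite_SigmaI finite_subset)
    qed
    have wf: "wf ((edges G par)\<inverse>)" by (rule finite_acyclic_wf_converse[OF fine acy])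
    obtain v where vD: "v \<in> D" and vmin: "\<And>y. (y, v) \<in> (edges G par)\<inverse> \<Longrightarrow> y \<notin> D"
      using wfE_min[OF wf, of v D for v] False by blast
    have sink: "\<And>t. t \<in> H \<Longrightarrow> v \<notin> par t"
    proof
      fix t assume tH: "t \<in> H" and vp: "v \<in> par t"
      then have "t \<in> D" using less.prems(3) vD by blast
      moreover have "(v, t) \<in> edges G par" using tH vp less.prems(2) by (auto simp: edges_def)
      ultimately show False using vmin by blast
    qed
    have vG: "v \<in> G" using vD less.prems by blast
    have vnp: "v \<notin> par v"
    proof
      assume "v \<in> par v"
      then have "(v,v) \<in> edges G par" using vG by (auto simp: edges_def)
      then show False using acy by (auto simp: acyclic_def)
    qed
    define D' where "D' = D - {v}"
    have Dins: "D = insert v D'" "v \<notin> D'" using vD by (auto simp: D'_def)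
    have vH: "v \<in> H" using vD less.prems by blast
    have eq1: "(\<Prod>t\<in>H. K t (restrict (upd D \<omega> (g(v:=a))) (par t)) (upd D \<omega> (g(v:=a)) t))
        = K v (restrict (upd D' \<omega> g) (par v)) a *
          (\<Prod>t\<in>H-{v}. K t (restrict (upd D' \<omega> g) (par t)) (upd D' \<omega> g t))" for g a
    proof -
      have fH: "finite H" using less.prems finG by (meson finite_subset)
      have "(\<Prod>t\<in>H. K t (restrict (upd D \<omega> (g(v:=a))) (par t)) (upd D \<omega> (g(v:=a)) t))
        = K t0 (restrict (upd D \<omega> (g(v:=a))) (par t0)) (upd D \<omega> (g(v:=a)) t0) * 
          (\<Prod>t\<in>H-{v}. K t (restrict (upd D \<omega> (g(v:=a))) (par t)) (upd D \<omega> (g(v:=a)) t))" if "t0 = v" for t0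
        using prod.remove[OF fH vH] that by simp
      moreover have "restrict (upd D \<omega> (g(v:=a))) (par v) = restrict (upd D' \<omega> g) (par v)"
        using vnp by (auto simp: restrict_def upd_def D'_def fun_eq_iff)
      moreover have "upd D \<omega> (g(v:=a)) v = a" using vD by (simp add: upd_def)
      moreover have "(\<Prod>t\<in>H-{v}. K t (restrict (upd D \<omega> (g(v:=a))) (par t)) (upd D \<omega> (g(v:=a)) t))
           = (\<Prod>t\<in>H-{v}. K t (restrict (upd D' \<omega> g) (par t)) (upd D' \<omega> g t))"
      proof (rule prod.cong[OF refl])
        fix t assume "t \<in> H - {v}"
        then have "v \<notin> par t" "t \<noteq> v" using sink by auto
        then show "K t (restrict (upd D \<omega> (g(v:=a))) (par t)) (upd D \<omega> (g(v:=a)) t)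
           = K t (restrict (upd D' \<omega> g) (par t)) (upd D' \<omega> g t)"
          by (auto simp: restrict_def upd_def D'_def fun_eq_iff intro!: arg_cong2[where f="K t"])
      qed
      ultimately show ?thesis by simp
    qed
    have "(\<Sum>g\<in>PiE D X. \<Prod>t\<in>H. K t (restrict (upd D \<omega> g) (par t)) (upd D \<omega> g t))
       = (\<Sum>g\<in>PiE D' X. \<Sum>a\<in>X v. \<Prod>t\<in>H. K t (restrict (upd D \<omega> (g(v:=a))) (par t)) (upd D \<omega> (g(v:=a)) t))"
      unfolding Dins(1) by (rule sum_PiE_insert[OF Dins(2)])
    also have "\<dots> = (\<Sum>g\<in>PiE D' X. \<Prod>t\<in>H-{v}. K t (restrict (upd D' \<omega> g) (par t)) (upd D' \<omega> g t))"
    proof (rule sum.cong[OF refl])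
      fix g assume g: "g \<in> PiE D' X"
      have xp: "restrict (upd D' \<omega> g) (par v) \<in> PiE (par v) X"
      proof -
        have "\<forall>u\<in>par v. upd D' \<omega> g u \<in> X u"
          using g less.prems(4) parG vG by (auto simp: upd_def PiE_iff Pi_def)
        then show ?thesis by auto
      qed
      show "(\<Sum>a\<in>X v. \<Prod>t\<in>H. K t (restrict (upd D \<omega> (g(v:=a))) (par t)) (upd D \<omega> (g(v:=a)) t))
         = (\<Prod>t\<in>H-{v}. K t (restrict (upd D' \<omega> g) (par t)) (upd D' \<omega> g t))"
        unfolding eq1 using Kpmf[OF vG xp] by (simp add: sum_distrib_right[symmetric])
    qed
    also have "\<dots> = (\<Prod>t\<in>(H-{v})-D'. K t (restrict \<omega> (par t)) (\<omega> t))"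
    proof (rule less.hyps)
      show "card D' < card D" using finD vD unfolding D'_def by (meson card_Diff1_less)
      show "D' \<subseteq> H - {v}" using less.prems by (auto simp: D'_def)
      show "H - {v} \<subseteq> G" using less.prems by auto
      show "\<forall>t\<in>H - {v}. par t \<inter> D' \<noteq> {} \<longrightarrow> t \<in> D'" using less.prems(3) by (auto simp: D'_def)
      show "\<omega> \<in> Pi G X" by fact
    qed
    also have "(H-{v})-D' = H - D" using vD by (auto simp: D'_def)
    finally show ?thesis .
  qed
qed



definition idx :: "('a \<Rightarrow> real) list \<Rightarrow> 'a set \<Rightarrow> nat" where
  "idx Ls B = (LEAST k. k < length Ls \<and> sum (Ls!k) B > 0)"

definition lpsP :: "('a \<Rightarrow> real) list \<Rightarrow> 'a set \<Rightarrow> 'a set \<Rightarrow> real" where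
  "lpsP Ls A B = sum (Ls ! idx Ls B) (A \<inter> B) / sum (Ls ! idx Ls B) B"

locale lps =
  fixes \<Omega> :: "'a set" and Ls :: "('a \<Rightarrow> real) list"
  assumes fin: "finite \<Omega>"
    and nonneg: "\<And>k \<omega>. k < length Ls \<Longrightarrow> \<omega> \<in> \<Omega> \<Longrightarrow> (Ls!k) \<omega> \<ge> 0"
    and cover: "\<And>\<omega>. \<omega> \<in> \<Omega> \<Longrightarrow> \<exists>k<length Ls. (Ls!k) \<omega> > 0"
begin

lemma sum_nonneg': "k < length Ls \<Longrightarrow> A \<subseteq> \<Omega> \<Longrightarrow> sum (Ls!k) A \<ge> 0"
  by (rule sum_nonneg) (use nonneg in blast)

lemma sum_mono': "k < length Ls \<Longrightarrow> A \<subseteq> B \<Longrightarrow> B \<subseteq> \<Omega> \<Longrightarrow> sum (Ls!k) A \<le> sum (Ls!k) B"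
  by (rule sum_mono2) (use fin nonneg in \<open>auto intro: finite_subset\<close>)

lemma idx_props:
  assumes "B \<subseteq> \<Omega>" "B \<noteq> {}"
  shows "idx Ls B < length Ls" "sum (Ls ! idx Ls B) B > 0" "\<And>i. i < idx Ls B \<Longrightarrow> sum (Ls!i) B = 0"
proof -
  obtain \<omega> where w: "\<omega> \<in> B" using assms by blast
  obtain k where k: "k < length Ls" "(Ls!k) \<omega> > 0" using cover w assms by blast
  have "sum (Ls!k) {\<omega>} \<le> sum (Ls!k) B" using sum_mono'[OF k(1), of "{\<omega>}" B] w assms by simp
  then have ex: "k < length Ls \<and> sum (Ls!k) B > 0" using k by simp
  show "idx Ls B < length Ls" "sum (Ls ! idx Ls B) B > 0" unfolding idx_def
    using LeastI[of "\<lambda>k. k < length Ls \<and> sum (Ls!k) B > 0", OF ex] by auto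
  fix i assume i: "i < idx Ls B"
  then have "\<not> (i < length Ls \<and> sum (Ls!i) B > 0)" unfolding idx_def by (rule not_less_Least)
  moreover have "i < length Ls" using i \<open>idx Ls B < length Ls\<close> by simp
  ultimately show "sum (Ls!i) B = 0" using sum_nonneg'[of i B] assms by simp
qed

lemma idx_eq:
  assumes "B \<subseteq> \<Omega>" "B \<noteq> {}" "k < length Ls" "sum (Ls!k) B > 0" "\<And>i. i < k \<Longrightarrow> sum (Ls!i) B = 0"
  shows "idx Ls B = k"
proof -
  have "idx Ls B \<le> k" unfolding idx_def by (rule Least_le) (use assms in simp)
  moreover have "\<not> idx Ls B < k" using assms(5) idx_props[OF assms(1,2)] by force
  ultimately show ?thesis by simp
qed

lemma full: "full_cond_prob \<Omega> (lpsP Ls)"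
  unfolding full_cond_prob_def
proof (intro conjI allI impI)
  fix B assume B: "B \<subseteq> \<Omega> \<and> B \<noteq> {}"
  note ip = idx_props[OF B[THEN conjunct1] B[THEN conjunct2]]
  let ?L = "Ls ! idx Ls B"
  show "0 \<le> lpsP Ls A B" if "A \<subseteq> \<Omega>" for A
  proof -
    have "0 \<le> sum ?L (A \<inter> B)" using ip B by (intro sum_nonneg'[of "idx Ls B"]) auto
    then show "0 \<le> lpsP Ls A B" using ip unfolding lpsP_def by simp
  qed
  show "lpsP Ls \<Omega> B = 1" using ip B unfolding lpsP_def by (simp add: Int_absorb1)
  show "lpsP Ls B B = 1" using ip B unfolding lpsP_def by simp
  show "lpsP Ls (A \<union> C) B = lpsP Ls A B + lpsP Ls C B" if AC: "A \<subseteq> \<Omega> \<and> C \<subseteq> \<Omega> \<and> A \<inter> C = {}" for A C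
  proof -
    have "sum ?L ((A \<union> C) \<inter> B) = sum ?L (A \<inter> B) + sum ?L (C \<inter> B)"
      using AC B fin by (subst sum.union_disjoint[symmetric]) (auto intro: finite_subset intro!: sum.cong)
    then show "lpsP Ls (A \<union> C) B = lpsP Ls A B + lpsP Ls C B"
      unfolding lpsP_def by (simp add: add_divide_distrib)
  qed
next
  fix A B C assume H: "A \<subseteq> \<Omega> \<and> B \<subseteq> \<Omega> \<and> C \<subseteq> \<Omega> \<and> B \<noteq> {} \<and> C \<inter> B \<noteq> {}"
  then have B: "B \<subseteq> \<Omega>" "B \<noteq> {}" and CB: "C \<inter> B \<subseteq> \<Omega>" "C \<inter> B \<noteq> {}" by auto
  note ip = idx_props[OF B]
  define k where "k = idx Ls B"
  show "lpsP Ls (A \<inter> C) B = lpsP Ls A (C \<inter> B) * lpsP Ls C B"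
  proof (cases "sum (Ls!k) (C \<inter> B) > 0")
    case True
    have "idx Ls (C \<inter> B) = k"
    proof (rule idx_eq[OF CB])
      show "k < length Ls" "sum (Ls!k) (C \<inter> B) > 0" using ip True by (auto simp: k_def)
      fix i assume "i < k"
      then have "sum (Ls!i) B = 0" "i < length Ls" using ip by (auto simp: k_def)
      then show "sum (Ls!i) (C \<inter> B) = 0"
        using sum_mono'[of i "C \<inter> B" B] sum_nonneg'[of i "C \<inter> B"] B CB(1) by simp
    qed
    then show ?thesis using True ip unfolding lpsP_def k_def[symmetric]
      by (simp add: Int_assoc Int_commute Int_left_commute)
  next
    case False
    have k: "k < length Ls" using ip by (simp add: k_def)
    have z: "sum (Ls!k) (C \<inter> B) = 0" using False sum_nonneg'[OF k, of "C \<inter> B"] CB(1) by simp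
    have "sum (Ls!k) (A \<inter> C \<inter> B) = 0"
      using sum_mono'[OF k, of "A \<inter> C \<inter> B" "C \<inter> B"] sum_nonneg'[OF k, of "A \<inter> C \<inter> B"] CB(1) z by force
    then show ?thesis using z unfolding lpsP_def k_def[symmetric] by (simp add: Int_assoc Int_commute)
  qed
qed

end


locale dagctx =
  fixes G :: "'n set" and par :: "'n \<Rightarrow> 'n set" and X :: "'n \<Rightarrow> 'v set"
  assumes dag: "is_dag G par"
    and X_fin: "\<forall>s\<in>G. finite (X s) \<and> X s \<noteq> {}"
begin

abbreviation "\<Omega> \<equiv> PiE G X"

lemma finG: "finite G" and parG: "t \<in> G \<Longrightarrow> par t \<subseteq> G" and acy: "acyclic (edges G par)"
  using dag by (auto simp: is_dag_def)

lemma edge: "t \<in> G \<Longrightarrow> p \<in> par t \<Longrightarrow> (p, t) \<in> edges G par"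
  by (auto simp: edges_def)

lemma desc_sub: "desc G par s \<subseteq> G" by (auto simp: desc_def)

lemma s_notin_desc: "s \<notin> desc G par s"
  using acy by (auto simp: desc_def acyclic_def)

lemma par_nondesc: assumes "s \<in> G" shows "par s \<subseteq> nondesc G par s"
proof
  fix p assume p: "p \<in> par s"
  have e: "(p, s) \<in> edges G par" using edge[OF assms p] .
  have "p \<in> G" using parG[OF assms] p by blast
  moreover have "p \<noteq> s" using e acy by (auto simp: acyclic_def)
  moreover have "p \<notin> desc G par s"
  proof
    assume "p \<in> desc G par s"
    then have "(s, p) \<in> (edges G par)\<^sup>+" by (simp add: desc_def)
    then have "(s, s) \<in> (edges G par)\<^sup>+" using e by (meson trancl.trancl_into_trancl)
    then show False using acy by (simp add: acyclic_def)
  qed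
  ultimately show "p \<in> nondesc G par s" by (simp add: nondesc_def)
qed

lemma nondesc_par: assumes "t \<in> nondesc G par s" shows "par t \<subseteq> nondesc G par s"
proof
  fix p assume p: "p \<in> par t"
  have tG: "t \<in> G" using assms by (simp add: nondesc_def)
  have e: "(p, t) \<in> edges G par" using edge[OF tG p] .
  have "p \<in> G" using parG[OF tG] p by blast
  moreover have "p \<noteq> s"
  proof
    assume "p = s" then have "(s,t) \<in> (edges G par)\<^sup>+" using e by auto
    then show False using assms tG by (simp add: nondesc_def desc_def)
  qed
  moreover have "p \<notin> desc G par s"
  proof
    assume "p \<in> desc G par s"
    then have "(s, p) \<in> (edges G par)\<^sup>+" by (simp add: desc_def)
    then have "(s,t) \<in> (edges G par)\<^sup>+" using e by (meson trancl.trancl_into_trancl)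
    then show False using assms tG by (simp add: nondesc_def desc_def)
  qed
  ultimately show "p \<in> nondesc G par s" by (simp add: nondesc_def)
qed

lemma desc_closed: "t \<in> G \<Longrightarrow> par t \<inter> desc G par s \<noteq> {} \<Longrightarrow> t \<in> desc G par s"
proof -
  assume tG: "t \<in> G" and "par t \<inter> desc G par s \<noteq> {}"
  then obtain p where p: "p \<in> par t" "(s, p) \<in> (edges G par)\<^sup>+" by (auto simp: desc_def)
  then have "(s,t) \<in> (edges G par)\<^sup>+" using edge[OF tG p(1)] by (meson trancl.trancl_into_trancl)
  then show ?thesis using tG by (simp add: desc_def)
qed

lemma restrict_par: "s \<in> G \<Longrightarrow> x \<in> PiE (nondesc G par s) X \<Longrightarrow> restrict x (par s) \<in> PiE (par s) X"
  using par_nondesc by (auto simp: PiE_iff)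

lemma combine_in:
  assumes "s \<in> G" "x \<in> PiE (nondesc G par s) X" "z \<in> X s" "zD \<in> PiE (desc G par s) X"
  shows "combine G par s z zD x \<in> \<Omega>"
  using assms by (auto simp: combine_def PiE_iff nondesc_def extensional_def desc_def)

lemma combine_inj:
  assumes "zD \<in> PiE (desc G par s) X" "zD' \<in> PiE (desc G par s) X"
    "combine G par s z zD x = combine G par s z' zD' x"
  shows "z = z' \<and> zD = zD'"
proof
  show "z = z'" using fun_cong[OF assms(3), of s] by (simp add: combine_def)
  show "zD = zD'"
  proof
    fix t show "zD t = zD' t"
    proof (cases "t \<in> desc G par s")
      case True
      then show ?thesis using fun_cong[OF assms(3), of t] s_notin_desc[of s] by (auto simp: combine_def split: if_splits)
    next
      case False then show ?thesis using assms(1,2) by (auto simp: PiE_iff extensional_def)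
    qed
  qed
qed

lemma event_eq:
  assumes "s \<in> G" "x \<in> PiE (nondesc G par s) X"
  shows "event \<Omega> (nondesc G par s) x = (\<lambda>(z,zD). combine G par s z zD x) ` (X s \<times> PiE (desc G par s) X)"
proof (intro set_eqI iffI)
  fix \<omega> assume w: "\<omega> \<in> event \<Omega> (nondesc G par s) x"
  have "\<omega> = combine G par s (\<omega> s) (restrict \<omega> (desc G par s)) x"
  proof
    fix t
    have wO: "\<omega> \<in> \<Omega>" and wx: "\<forall>u\<in>nondesc G par s. \<omega> u = x u" using w by (auto simp: event_def)
    show "\<omega> t = combine G par s (\<omega> s) (restrict \<omega> (desc G par s)) x t"
    proof (cases "t = s \<or> t \<in> desc G par s")
      case True then show ?thesis by (auto simp: combine_def)
    next
      case False
      then have c: "combine G par s (\<omega> s) (restrict \<omega> (desc G par s)) x t = x t" by (auto simp: combine_def)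
      show ?thesis
      proof (cases "t \<in> G")
        case True
        then have "t \<in> nondesc G par s" using False by (simp add: nondesc_def)
        then show ?thesis using wx c by simp
      next
        case tG: False
        have "\<omega> t = undefined" using wO tG by (simp add: PiE_def extensional_def)
        moreover have "x t = undefined" using assms(2) tG by (simp add: PiE_def extensional_def nondesc_def)
        ultimately show ?thesis using c by simp
      qed
    qed
  qed
  moreover have "\<omega> s \<in> X s" "restrict \<omega> (desc G par s) \<in> PiE (desc G par s) X"
  proof -
    have wO: "\<omega> \<in> \<Omega>" using w by (simp add: event_def)
    show "\<omega> s \<in> X s" using wO assms(1) by (rule PiE_mem)
    show "restrict \<omega> (desc G par s) \<in> PiE (desc G par s) X"
      using wO desc_sub by (simp add: PiE_iff subset_iff)
  qed
  ultimately show "\<omega> \<in> (\<lambda>(z,zD). combine G par s z zD x) ` (X s \<times> PiE (desc G par s) X)"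
    by (intro image_eqI[where x="(\<omega> s, restrict \<omega> (desc G par s))"]) simp_all
next
  fix \<omega> assume "\<omega> \<in> (\<lambda>(z,zD). combine G par s z zD x) ` (X s \<times> PiE (desc G par s) X)"
  then obtain z zD where zz: "z \<in> X s" "zD \<in> PiE (desc G par s) X" "\<omega> = combine G par s z zD x" by auto
  then show "\<omega> \<in> event \<Omega> (nondesc G par s) x"
    unfolding event_def using combine_in[OF assms zz(1,2)] zz(3) by (auto simp: combine_def nondesc_def)
qed

lemma fiber_eq:
  assumes "s \<in> G" "x \<in> PiE (nondesc G par s) X" "z \<in> X s"
  shows "event \<Omega> {s} (\<lambda>_. z) \<inter> event \<Omega> (nondesc G par s) x = (\<lambda>zD. combine G par s z zD x) ` PiE (desc G par s) X"
proof -
  have "event \<Omega> {s} (\<lambda>_. z) \<inter> event \<Omega> (nondesc G par s) x =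
     {\<omega> \<in> (\<lambda>(z,zD). combine G par s z zD x) ` (X s \<times> PiE (desc G par s) X). \<omega> s = z}"
    unfolding event_eq[OF assms(1,2), symmetric] by (auto simp: event_def)
  also have "\<dots> = (\<lambda>zD. combine G par s z zD x) ` PiE (desc G par s) X"
    using assms(3) by (auto simp: combine_def)
  finally show ?thesis .
qed

lemma sum_event:
  assumes "s \<in> G" "x \<in> PiE (nondesc G par s) X"
  shows "(\<Sum>\<omega>\<in>event \<Omega> (nondesc G par s) x. F \<omega>) = (\<Sum>z\<in>X s. \<Sum>zD\<in>PiE (desc G par s) X. F (combine G par s z zD x))"
proof -
  have inj: "inj_on (\<lambda>(z,zD). combine G par s z zD x) (X s \<times> PiE (desc G par s) X)"
    by (auto simp: inj_on_def dest: combine_inj)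
  show ?thesis unfolding event_eq[OF assms] sum.reindex[OF inj]
    by (simp add: sum.cartesian_product case_prod_unfold)
qed

lemma sum_fiber:
  assumes "s \<in> G" "x \<in> PiE (nondesc G par s) X" "z \<in> X s"
  shows "(\<Sum>\<omega>\<in>event \<Omega> {s} (\<lambda>_. z) \<inter> event \<Omega> (nondesc G par s) x. F \<omega>) = (\<Sum>zD\<in>PiE (desc G par s) X. F (combine G par s z zD x))"
proof -
  have inj: "inj_on (\<lambda>zD. combine G par s z zD x) (PiE (desc G par s) X)"
    by (auto simp: inj_on_def dest: combine_inj)
  show ?thesis unfolding fiber_eq[OF assms] sum.reindex[OF inj] by simp
qed

lemma factor:
  fixes K :: "'n \<Rightarrow> ('n\<Rightarrow>'v) \<Rightarrow> 'v \<Rightarrow> real"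
  assumes Kpmf: "\<And>t xp. t\<in>G \<Longrightarrow> xp \<in> PiE (par t) X \<Longrightarrow> (\<Sum>a\<in>X t. K t xp a) = 1"
    and s: "s \<in> G" and x: "x \<in> PiE (nondesc G par s) X" and z: "z \<in> X s"
  shows "(\<Sum>zD\<in>PiE (desc G par s) X. \<Prod>t\<in>G. K t (restrict (combine G par s z zD x) (par t)) (combine G par s z zD x t))
    = K s (restrict x (par s)) z * (\<Prod>t\<in>nondesc G par s. K t (restrict x (par t)) (x t))"
proof -
  let ?D = "desc G par s" and ?N = "nondesc G par s"
  have "PiE ?D X \<noteq> {}" using X_fin desc_sub by (auto simp: PiE_eq_empty_iff)
  then obtain zD0 where zD0: "zD0 \<in> PiE ?D X" by blast
  define \<omega> where "\<omega> = combine G par s z zD0 x"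
  have wG: "\<omega> \<in> Pi G X" using combine_in[OF s x z zD0] by (auto simp: \<omega>_def PiE_iff)
  have cu: "combine G par s z zD x = upd ?D \<omega> zD" for zD
    by (auto simp: combine_def upd_def \<omega>_def fun_eq_iff s_notin_desc)
  have "(\<Sum>zD\<in>PiE ?D X. \<Prod>t\<in>G. K t (restrict (combine G par s z zD x) (par t)) (combine G par s z zD x t))
     = (\<Prod>t\<in>G - ?D. K t (restrict \<omega> (par t)) (\<omega> t))"
    unfolding cu by (rule marg[OF dag Kpmf]) (auto simp: desc_sub wG intro: desc_closed)
  also have "G - ?D = insert s ?N" using s s_notin_desc by (auto simp: nondesc_def)
  also have "(\<Prod>t\<in>insert s ?N. K t (restrict \<omega> (par t)) (\<omega> t))
      = K s (restrict \<omega> (par s)) (\<omega> s) * (\<Prod>t\<in>?N. K t (restrict \<omega> (par t)) (\<omega> t))"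
    by (rule prod.insert) (use finG in \<open>auto simp: nondesc_def\<close>)
  also have "restrict \<omega> (par s) = restrict x (par s)"
    using par_nondesc[OF s] by (auto simp: restrict_def fun_eq_iff \<omega>_def combine_def nondesc_def)
  also have "\<omega> s = z" by (simp add: \<omega>_def combine_def)
  also have "(\<Prod>t\<in>?N. K t (restrict \<omega> (par t)) (\<omega> t)) = (\<Prod>t\<in>?N. K t (restrict x (par t)) (x t))"
  proof (rule prod.cong[OF refl])
    fix t assume t: "t \<in> ?N"
    have "restrict \<omega> (par t) = restrict x (par t)"
      using nondesc_par[OF t] by (auto simp: restrict_def fun_eq_iff \<omega>_def combine_def nondesc_def)
    moreover have "\<omega> t = x t" using t by (auto simp: \<omega>_def combine_def nondesc_def)
    ultimately show "K t (restrict \<omega> (par t)) (\<omega> t) = K t (restrict x (par t)) (x t)" by simp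
  qed
  finally show ?thesis .
qed

end


lemma additive_sum:
  assumes fc: "full_cond_prob \<Omega> P" and fin: "finite \<Omega>" and ne: "\<Omega> \<noteq> {}" and A: "A \<subseteq> \<Omega>"
  shows "P A \<Omega> = (\<Sum>\<omega>\<in>A. P {\<omega>} \<Omega>)"
proof -
  have add: "\<And>A C. A \<subseteq> \<Omega> \<Longrightarrow> C \<subseteq> \<Omega> \<Longrightarrow> A \<inter> C = {} \<Longrightarrow> P (A \<union> C) \<Omega> = P A \<Omega> + P C \<Omega>"
    using fc ne unfolding full_cond_prob_def by blast
  have e: "P {} \<Omega> = 0" using add[of "{}" "{}"] by simp
  have "finite A" using A fin by (rule finite_subset)
  then show ?thesis using A
  proof (induction A rule: finite_induct)
    case empty then show ?case by (simp add: e)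
  next
    case (insert a F)
    have "P (insert a F) \<Omega> = P ({a} \<union> F) \<Omega>" by simp
    also have "\<dots> = P {a} \<Omega> + P F \<Omega>" using insert by (intro add) auto
    finally show ?case using insert by simp
  qed
qed

lemma fcp_nonneg: "full_cond_prob \<Omega> P \<Longrightarrow> A \<subseteq> \<Omega> \<Longrightarrow> B \<subseteq> \<Omega> \<Longrightarrow> B \<noteq> {} \<Longrightarrow> P A B \<ge> 0"
  unfolding full_cond_prob_def by (drule conjunct1, drule spec[of _ B]) simp

lemma fcp_one: "full_cond_prob \<Omega> P \<Longrightarrow> B \<subseteq> \<Omega> \<Longrightarrow> B \<noteq> {} \<Longrightarrow> P \<Omega> B = 1"
  unfolding full_cond_prob_def by (drule conjunct1, drule spec[of _ B]) simp

lemma fcp_F2: "full_cond_prob \<Omega> P \<Longrightarrow> A \<subseteq> \<Omega> \<Longrightarrow> B \<subseteq> \<Omega> \<Longrightarrow> C \<subseteq> \<Omega> \<Longrightarrow> B \<noteq> {} \<Longrightarrow> C \<inter> B \<noteq> {} \<Longrightarrow>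
   P (A \<inter> C) B = P A (C \<inter> B) * P C B"
  unfolding full_cond_prob_def by (drule conjunct2, drule spec[of _ A], drule spec[of _ B], drule spec[of _ C]) simp

theorem proposition1:
  fixes G :: "'n set" and par :: "'n \<Rightarrow> 'n set" and X :: "'n \<Rightarrow> 'v set"
    and M :: "'n \<Rightarrow> ('n \<Rightarrow> 'v) \<Rightarrow> ('v \<Rightarrow> real) set"
    and \<Gamma> :: "'n \<Rightarrow> ('n \<Rightarrow> 'v) \<Rightarrow> ('v \<Rightarrow> real) set"
  assumes dag: "is_dag G par"
    and X_fin: "\<forall>s\<in>G. finite (X s) \<and> X s \<noteq> {}"
    and M_ok: "\<forall>s\<in>G. \<forall>xp\<in>PiE (par s) X. local_model_ok (X s) (M s xp)"
    and M_Gamma: "\<forall>s\<in>G. \<forall>xp\<in>PiE (par s) X.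
       M s xp = {p \<in> extensional (X s). (\<Sum>z\<in>X s. p z) = 1 \<and>
                   (\<forall>\<gamma>\<in>\<Gamma> s xp. (\<Sum>z\<in>X s. p z * \<gamma> z) \<ge> 0)}"
  shows "F_irr_global G par X M =
     {p. is_pmf_on (PiE G X) p \<and>
         (\<forall>s\<in>G. \<forall>x\<in>PiE (nondesc G par s) X. \<forall>\<gamma>\<in>\<Gamma> s (restrict x (par s)).
            (\<Sum>z\<in>X s. \<Sum>zD\<in>PiE (desc G par s) X. p (combine G par s z zD x) * \<gamma> z) \<ge> 0)}"
proof -
  interpret dagctx G par X using dag X_fin by unfold_locales
  let ?N = "nondesc G par" and ?D = "desc G par"
  let ?E = "\<lambda>s z. event \<Omega> {s} (\<lambda>_::'n. z)"
  let ?B = "\<lambda>s x. event \<Omega> (nondesc G par s) x"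
  have finO: "finite \<Omega>" using finG X_fin by (intro finite_PiE) auto
  have neO: "\<Omega> \<noteq> {}" using X_fin by (auto simp: PiE_eq_empty_iff)
  have B_sub: "?B s x \<subseteq> \<Omega>" for s x by (auto simp: event_def)
  have E_sub: "?E s z \<inter> ?B s x \<subseteq> \<Omega>" for s z x by (auto simp: event_def)
  have B_ne: "?B s x \<noteq> {}" if sx: "s \<in> G" "x \<in> PiE (?N s) X" for s x
  proof -
    obtain z where "z \<in> X s" using X_fin sx(1) by (meson ex_in_conv)
    moreover have "PiE (?D s) X \<noteq> {}" unfolding PiE_eq_empty_iff using X_fin desc_sub by blast
    then obtain zD where "zD \<in> PiE (?D s) X" by blast
    ultimately show ?thesis using event_eq[OF sx] by auto
  qed
  show ?thesis
  proof (intro set_eqI iffI)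
    fix p assume "p \<in> F_irr_global G par X M"
    then obtain P where P: "P \<in> F_irr G par X M" and pP: "p = (\<lambda>x\<in>\<Omega>. P {x} \<Omega>)"
      by (auto simp: F_irr_global_def)
    have fc: "full_cond_prob \<Omega> P" using P by (simp add: F_irr_def)
    have nn: "P A B \<ge> 0" if "A \<subseteq> \<Omega>" "B \<subseteq> \<Omega>" "B \<noteq> {}" for A B
      using fcp_nonneg[OF fc that] .
    have sumP: "(\<Sum>\<omega>\<in>A. p \<omega>) = P A \<Omega>" if "A \<subseteq> \<Omega>" for A
      using additive_sum[OF fc finO neO that] that pP by (auto intro!: sum.cong)
    have pmf: "is_pmf_on \<Omega> p"
      unfolding is_pmf_on_def
    proof (intro conjI ballI)
      show "p \<in> extensional \<Omega>" using pP by simp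
      show "0 \<le> p z" if "z \<in> \<Omega>" for z using that nn[of "{z}" \<Omega>] neO pP by simp
      have "P \<Omega> \<Omega> = 1" using fcp_one[OF fc _ neO] by simp
      then show "sum p \<Omega> = 1" using sumP[of \<Omega>] by simp
    qed
    show "p \<in> {p. is_pmf_on \<Omega> p \<and> (\<forall>s\<in>G. \<forall>x\<in>PiE (?N s) X. \<forall>\<gamma>\<in>\<Gamma> s (restrict x (par s)).
            (\<Sum>z\<in>X s. \<Sum>zD\<in>PiE (?D s) X. p (combine G par s z zD x) * \<gamma> z) \<ge> 0)}"
    proof (intro CollectI conjI pmf ballI)
      fix s x \<gamma> assume s: "s \<in> G" and x: "x \<in> PiE (?N s) X" and \<gamma>: "\<gamma> \<in> \<Gamma> s (restrict x (par s))"
      have xp: "restrict x (par s) \<in> PiE (par s) X" by (rule restrict_par[OF s x])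
      have inM: "(\<lambda>z\<in>X s. P (?E s z) (?B s x)) \<in> M s (restrict x (par s))"
        using P s x by (simp add: F_irr_def)
      have "\<forall>\<gamma>\<in>\<Gamma> s (restrict x (par s)). (\<Sum>z\<in>X s. (\<lambda>z\<in>X s. P (?E s z) (?B s x)) z * \<gamma> z) \<ge> 0"
        using inM M_Gamma s xp by blast
      then have "(\<Sum>z\<in>X s. (\<lambda>z\<in>X s. P (?E s z) (?B s x)) z * \<gamma> z) \<ge> 0" using \<gamma> by blast
      then have ineq: "(\<Sum>z\<in>X s. P (?E s z) (?B s x) * \<gamma> z) \<ge> 0"
        by (simp cong: sum.cong)
      have eqz: "(\<Sum>zD\<in>PiE (?D s) X. p (combine G par s z zD x)) = P (?E s z) (?B s x) * P (?B s x) \<Omega>"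
        if z: "z \<in> X s" for z
      proof -
        have "(\<Sum>zD\<in>PiE (?D s) X. p (combine G par s z zD x)) = P (?E s z \<inter> ?B s x) \<Omega>"
          using sum_fiber[OF s x z, of p] sumP[OF E_sub] by simp
        also have "\<dots> = P (?E s z) (?B s x \<inter> \<Omega>) * P (?B s x) \<Omega>"
        proof -
          have "?E s z \<subseteq> \<Omega>" by (auto simp: event_def)
          moreover have "?B s x \<inter> \<Omega> \<noteq> {}" using B_ne[OF s x] B_sub by blast
          ultimately show ?thesis using fcp_F2[OF fc _ _ B_sub neO] by simp
        qed
        also have "?B s x \<inter> \<Omega> = ?B s x" using B_sub by blast
        finally show ?thesis .
      qed
      have "(\<Sum>z\<in>X s. \<Sum>zD\<in>PiE (?D s) X. p (combine G par s z zD x) * \<gamma> z)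
          = (\<Sum>z\<in>X s. (\<Sum>zD\<in>PiE (?D s) X. p (combine G par s z zD x)) * \<gamma> z)"
        by (simp add: sum_distrib_right)
      also have "\<dots> = P (?B s x) \<Omega> * (\<Sum>z\<in>X s. P (?E s z) (?B s x) * \<gamma> z)"
        by (simp add: eqz sum_distrib_left mult_ac)
      finally show "(\<Sum>z\<in>X s. \<Sum>zD\<in>PiE (?D s) X. p (combine G par s z zD x) * \<gamma> z) \<ge> 0"
        using ineq nn[of "?B s x" \<Omega>] B_sub neO by simp
    qed
  next
    fix p assume "p \<in> {p. is_pmf_on \<Omega> p \<and> (\<forall>s\<in>G. \<forall>x\<in>PiE (?N s) X. \<forall>\<gamma>\<in>\<Gamma> s (restrict x (par s)).
            (\<Sum>z\<in>X s. \<Sum>zD\<in>PiE (?D s) X. p (combine G par s z zD x) * \<gamma> z) \<ge> 0)}"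
    then have pmf: "is_pmf_on \<Omega> p" and pcond: "\<And>s x \<gamma>. s\<in>G \<Longrightarrow> x\<in>PiE (?N s) X \<Longrightarrow> \<gamma>\<in>\<Gamma> s (restrict x (par s)) \<Longrightarrow>
            (\<Sum>z\<in>X s. \<Sum>zD\<in>PiE (?D s) X. p (combine G par s z zD x) * \<gamma> z) \<ge> 0" by auto
    define m where "m t xp = (SOME q. q \<in> M t xp)" for t xp
    have m_in: "m t xp \<in> M t xp" if "t \<in> G" "xp \<in> PiE (par t) X" for t xp
    proof -
      have "local_model_ok (X t) (M t xp)" using M_ok that by blast
      then have "M t xp \<noteq> {}" unfolding local_model_ok_def by (rule conjunct1)
      then have "\<exists>q. q \<in> M t xp" by blast
      then show ?thesis unfolding m_def by (rule someI_ex)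
    qed
    have m_pmf: "is_pmf_on (X t) (m t xp)" if "t \<in> G" "xp \<in> PiE (par t) X" for t xp
    proof -
      have "local_model_ok (X t) (M t xp)" using M_ok that by blast
      then have "\<forall>q\<in>M t xp. is_pmf_on (X t) q" unfolding local_model_ok_def by blast
      then show ?thesis using m_in[OF that] by blast
    qed
    define K where "K S t xp v = (if t \<in> S then 1 / real (card (X t)) else m t xp v)" for S t xp v
    have Kpmf: "(\<Sum>a\<in>X t. K S t xp a) = 1" if "t \<in> G" "xp \<in> PiE (par t) X" for S t xp
    proof (cases "t \<in> S")
      case True
      have "finite (X t)" "X t \<noteq> {}" using X_fin that(1) by auto
      then have "card (X t) \<noteq> 0" by simp
      then show ?thesis using True by (simp add: K_def)
    next
      case False then show ?thesis using m_pmf[OF that] by (simp add: K_def is_pmf_on_def)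
    qed
    have Knn: "K S t xp a \<ge> 0" if "t \<in> G" "xp \<in> PiE (par t) X" "a \<in> X t" for S t xp a
      using m_pmf[OF that(1,2)] that(3) by (simp add: K_def is_pmf_on_def)
    define r where "r S \<omega> = (\<Prod>t\<in>G. K S t (restrict \<omega> (par t)) (\<omega> t))" for S \<omega>
    have r_nn: "r S \<omega> \<ge> 0" if "\<omega> \<in> \<Omega>" for S \<omega>
      unfolding r_def
    proof (rule prod_nonneg)
      fix t assume t: "t \<in> G"
      have "restrict \<omega> (par t) \<in> PiE (par t) X" using that parG[OF t] by (auto simp: PiE_iff)
      moreover have "\<omega> t \<in> X t" using that t by (simp add: PiE_iff)
      ultimately show "K S t (restrict \<omega> (par t)) (\<omega> t) \<ge> 0" using Knn t by blast
    qed
    obtain xs where xs: "set xs = Pow G" using finite_list[of "Pow G"] finG by auto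
    define sl where "sl = sort_key card xs"
    have sl_set: "set sl = Pow G" by (simp add: sl_def xs)
    have sl_sorted: "sorted (map card sl)" by (simp add: sl_def)
    define Ls where "Ls = p # map r sl"
    interpret L: lps \<Omega> Ls
    proof
      show "finite \<Omega>" by (rule finO)
      fix k \<omega> assume k: "k < length Ls" and w: "\<omega> \<in> \<Omega>"
      show "(Ls!k) \<omega> \<ge> 0"
      proof (cases k)
        case 0 then show ?thesis using pmf w by (simp add: Ls_def is_pmf_on_def)
      next
        case (Suc j) then show ?thesis using k r_nn[OF w] by (simp add: Ls_def)
      qed
    next
      fix \<omega> assume w: "\<omega> \<in> \<Omega>"
      have "G \<in> set sl" using sl_set by simp
      then obtain j where j: "j < length sl" "sl ! j = G" by (meson in_set_conv_nth)
      have "r G \<omega> > 0" unfolding r_def K_def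
        using X_fin by (intro prod_pos) (simp add: card_gt_0_iff)
      then show "\<exists>k<length Ls. (Ls!k) \<omega> > 0" using j
        by (intro exI[of _ "Suc j"]) (simp add: Ls_def)
    qed
    define P where "P = lpsP Ls"
    have fc: "full_cond_prob \<Omega> P" unfolding P_def by (rule L.full)
    have sp: "sum p \<Omega> = 1" using pmf by (simp add: is_pmf_on_def)
    have idx0: "idx Ls \<Omega> = 0"
      by (rule L.idx_eq) (use neO sp in \<open>auto simp: Ls_def\<close>)
    have Pp: "P {x} \<Omega> = p x" if "x \<in> \<Omega>" for x
      using that unfolding P_def lpsP_def idx0 by (simp add: Ls_def sp)
    have PF: "P \<in> F_irr G par X M"
      unfolding F_irr_def
    proof (intro CollectI conjI fc ballI)
      fix s x assume s: "s \<in> G" and x: "x \<in> PiE (?N s) X"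
      let ?xp = "restrict x (par s)"
      have xp: "?xp \<in> PiE (par s) X" by (rule restrict_par[OF s x])
      define k where "k = idx Ls (?B s x)"
      note ip = L.idx_props[OF B_sub B_ne[OF s x], folded k_def]
      define f where "f z = (\<Sum>zD\<in>PiE (?D s) X. (Ls!k) (combine G par s z zD x))" for z
      have SB: "sum (Ls!k) (?B s x) = (\<Sum>z\<in>X s. f z)" unfolding f_def by (rule sum_event[OF s x])
      have SE: "sum (Ls!k) (?E s z \<inter> ?B s x) = f z" if "z \<in> X s" for z
        unfolding f_def by (rule sum_fiber[OF s x that])
      have c_nn: "(\<Prod>t\<in>?N s. K S t (restrict x (par t)) (x t)) \<ge> 0" for S
      proof (rule prod_nonneg)
        fix t assume t: "t \<in> ?N s"
        have tG: "t \<in> G" using t by (simp add: nondesc_def)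
        have "restrict x (par t) \<in> PiE (par t) X" using x nondesc_par[OF t] by (auto simp: PiE_iff)
        moreover have "x t \<in> X t" using x t by (simp add: PiE_iff)
        ultimately show "K S t (restrict x (par t)) (x t) \<ge> 0" using Knn tG by blast
      qed
      have fS: "(\<Sum>zD\<in>PiE (?D s) X. r S (combine G par s z zD x))
          = K S s ?xp z * (\<Prod>t\<in>?N s. K S t (restrict x (par t)) (x t))" if "z \<in> X s" for S z
        unfolding r_def by (rule factor[OF Kpmf s x that])
      have sumr: "sum (r S) (?B s x) = (\<Sum>z\<in>X s. K S s ?xp z) * (\<Prod>t\<in>?N s. K S t (restrict x (par t)) (x t))" for S
        unfolding sum_event[OF s x] by (simp add: fS sum_distrib_right)
      have COND: "(\<Sum>z\<in>X s. f z * \<gamma> z) \<ge> 0" if \<gamma>: "\<gamma> \<in> \<Gamma> s ?xp" for \<gamma>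
      proof (cases k)
        case 0
        have "(\<Sum>z\<in>X s. f z * \<gamma> z) = (\<Sum>z\<in>X s. \<Sum>zD\<in>PiE (?D s) X. p (combine G par s z zD x) * \<gamma> z)"
          unfolding f_def 0 by (simp add: Ls_def sum_distrib_right)
        then show ?thesis using pcond[OF s x \<gamma>] by simp
      next
        case (Suc j)
        have j: "j < length sl" using ip(1) Suc by (simp add: Ls_def)
        define S where "S = sl ! j"
        have Lk: "Ls ! k = r S" using Suc j by (simp add: Ls_def S_def)
        let ?c = "\<lambda>S. (\<Prod>t\<in>?N s. K S t (restrict x (par t)) (x t))"
        have fz: "f z = K S s ?xp z * ?c S" if "z \<in> X s" for z
          unfolding f_def Lk by (rule fS[OF that])
        show ?thesis
        proof (cases "s \<in> S")
          case False
          have "m s ?xp \<in> M s ?xp" by (rule m_in[OF s xp])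
          then have "(\<Sum>z\<in>X s. m s ?xp z * \<gamma> z) \<ge> 0" using M_Gamma s xp \<gamma> by blast
          moreover have "(\<Sum>z\<in>X s. f z * \<gamma> z) = ?c S * (\<Sum>z\<in>X s. m s ?xp z * \<gamma> z)"
          proof -
            have "(\<Sum>z\<in>X s. f z * \<gamma> z) = (\<Sum>z\<in>X s. ?c S * (m s ?xp z * \<gamma> z))"
              by (rule sum.cong) (simp_all add: fz K_def False)
            then show ?thesis by (simp add: sum_distrib_left)
          qed
          ultimately show ?thesis using c_nn[of S] by simp
        next
          case True
          define S' where "S' = S - {s}"
          have cS: "?c S' = ?c S"
            by (rule prod.cong[OF refl]) (auto simp: K_def S'_def nondesc_def)
          have "sum (r S) (?B s x) = ?c S" using sumr[of S] Kpmf[OF s xp, of S] by simp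
          then have cpos: "?c S > 0" using ip(2) Lk by simp
          have SG: "S \<in> Pow G" using sl_set j S_def by (metis nth_mem)
          then have "S' \<in> set sl" using sl_set by (auto simp: S'_def)
          then obtain i where i: "i < length sl" "sl ! i = S'" by (meson in_set_conv_nth)
          have "card S' < card S" using True SG finG unfolding S'_def
            by (meson card_Diff1_less finite_subset PowD)
          then have "i < j"
          proof -
            have "\<not> j \<le> i"
            proof
              assume "j \<le> i"
              then have "card (sl ! j) \<le> card (sl ! i)" using sorted_nth_mono[OF sl_sorted \<open>j \<le> i\<close>] i(1) by simp
              then show False using \<open>card S' < card S\<close> i j S_def by simp
            qed
            then show ?thesis by simp
          qed
          then have "sum (Ls ! Suc i) (?B s x) = 0" using ip(3) Suc by simp
          moreover have "sum (Ls ! Suc i) (?B s x) = ?c S'"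
            using i sumr[of S'] Kpmf[OF s xp, of S'] by (simp add: Ls_def)
          ultimately show ?thesis using cpos cS by simp
        qed
      qed
      have Peq: "P (?E s z) (?B s x) = f z / (\<Sum>z\<in>X s. f z)" if "z \<in> X s" for z
        unfolding P_def lpsP_def k_def[symmetric] SE[OF that] SB ..
      have Spos: "(\<Sum>z\<in>X s. f z) > 0" using ip(2) SB by simp
      show "(\<lambda>z\<in>X s. P (?E s z) (?B s x)) \<in> M s ?xp"
        unfolding M_Gamma[rule_format, OF s xp]
      proof (intro CollectI conjI ballI)
        show "(\<lambda>z\<in>X s. P (?E s z) (?B s x)) \<in> extensional (X s)" by simp
        have "(\<Sum>z\<in>X s. (\<lambda>z\<in>X s. P (?E s z) (?B s x)) z) = (\<Sum>z\<in>X s. f z / (\<Sum>z\<in>X s. f z))"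
          by (rule sum.cong) (simp_all add: Peq)
        also have "\<dots> = 1" using Spos by (simp add: sum_divide_distrib[symmetric])
        finally show "(\<Sum>z\<in>X s. (\<lambda>z\<in>X s. P (?E s z) (?B s x)) z) = 1" .
        fix \<gamma> assume \<gamma>: "\<gamma> \<in> \<Gamma> s ?xp"
        have "(\<Sum>z\<in>X s. (\<lambda>z\<in>X s. P (?E s z) (?B s x)) z * \<gamma> z) = (\<Sum>z\<in>X s. f z * \<gamma> z) / (\<Sum>z\<in>X s. f z)"
          by (simp add: Peq sum_divide_distrib mult_ac cong: sum.cong)
        then show "(\<Sum>z\<in>X s. (\<lambda>z\<in>X s. P (?E s z) (?B s x)) z * \<gamma> z) \<ge> 0"
          using COND[OF \<gamma>] Spos by simp
      qed
    qed
    have "p = (\<lambda>x\<in>\<Omega>. P {x} \<Omega>)"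
    proof
      fix x show "p x = (\<lambda>x\<in>\<Omega>. P {x} \<Omega>) x"
        using Pp pmf by (cases "x \<in> \<Omega>") (auto simp: is_pmf_on_def extensional_def)
    qed
    then show "p \<in> F_irr_global G par X M" using PF unfolding F_irr_global_def by blast
  qed
qed


end
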